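(* For integers $m\ge1$ and $0\le k\le m$, the circle-valued Morse function $f\colon K_{m,k}\to S^1$ induces a short exact sequence $1\to F_{m+k}\to G_{m,k}\to\mathbb Z\to1$, where $F_{m+k}$ is a free group of rank $m+k$ (and the map $G_{m,k}\to\mathbb Z$ sends every generator $a_i$ to a fixed generator of $\mathbb Z$).
   Context: $G_{m,k}=\langle a_1,\dots,a_{m+k+1}\mid [a_i,a_{i+1}]=1\ (1\le i\le m),\ a_{m+j+1}^{-1}a_ja_{m+j+1}=a_{m+j}\ (1\le j\le k)\rangle$, and $K_{m,k}$ is its presentation $2$–complex (one $0$–cell, one $1$–cell per generator, one square per relator). Give $S^1$ the CW structure with one $0$–cell and one $1$–cell; $f$ sends the $0$–cell of $K_{m,k}$ to the $0$–cell of $S^1$, maps each $1$–cell homeomorphically onto the $1$–cell of $S^1$ (in its orientation), and extends linearly over the square $2$–cells (so that its lift to universal covers is a Morse function whose value on each square is affine). *)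

theory Defs
  imports "HOL-Algebra.Algebra"
begin

text \<open>Words in generators indexed by naturals: a letter (i, True) stands for a_i,
  and (i, False) for a_i inverse.\<close>

type_synonym letter = "nat \<times> bool"
type_synonym word = "letter list"

definition inv_word :: "word \<Rightarrow> word" where
  "inv_word w = rev (map (\<lambda>(i, b). (i, \<not> b)) w)"

definition words_over :: "nat set \<Rightarrow> word set" where
  "words_over A = {w. \<forall>x \<in> set w. fst x \<in> A}"

inductive pres_eq :: "nat set \<Rightarrow> word set \<Rightarrow> word \<Rightarrow> word \<Rightarrow> bool"
  for A :: "nat set" and R :: "word set" where
  pres_refl: "pres_eq A R w w"
| pres_sym: "pres_eq A R v w \<Longrightarrow> pres_eq A R w v"
| pres_trans: "pres_eq A R u v \<Longrightarrow> pres_eq A R v w \<Longrightarrow> pres_eq A R u w"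
| pres_cancel: "i \<in> A \<Longrightarrow> pres_eq A R (u @ [(i, b), (i, \<not> b)] @ v) (u @ v)"
| pres_rel: "r \<in> R \<Longrightarrow> pres_eq A R (u @ r @ v) (u @ v)"

definition pres_class :: "nat set \<Rightarrow> word set \<Rightarrow> word \<Rightarrow> word set" where
  "pres_class A R w = {v \<in> words_over A. pres_eq A R w v}"

definition pres_mult :: "nat set \<Rightarrow> word set \<Rightarrow> word set \<Rightarrow> word set \<Rightarrow> word set" where
  "pres_mult A R U W = {v \<in> words_over A. \<exists>x\<in>U. \<exists>y\<in>W. pres_eq A R (x @ y) v}"

definition presented_group :: "nat set \<Rightarrow> word set \<Rightarrow> word set monoid" where
  "presented_group A R =
    \<lparr>carrier = pres_class A R ` words_over A,
     monoid.mult = pres_mult A R,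
     one = pres_class A R []\<rparr>"

definition pres_gen :: "nat set \<Rightarrow> word set \<Rightarrow> nat \<Rightarrow> word set" where
  "pres_gen A R i = pres_class A R [(i, True)]"

definition free_group_rank :: "nat \<Rightarrow> word set monoid" where
  "free_group_rank n = presented_group {1..n} {}"

text \<open>Commutator [a_i, a_{i+1}] = a_i^{-1} a_{i+1}^{-1} a_i a_{i+1};
  the relation a_{m+j+1}^{-1} a_j a_{m+j+1} = a_{m+j} becomes the relator
  a_{m+j+1}^{-1} a_j a_{m+j+1} a_{m+j}^{-1}.\<close>

definition G_gens :: "nat \<Rightarrow> nat \<Rightarrow> nat set" where
  "G_gens m k = {1..m+k+1}"

definition G_rels :: "nat \<Rightarrow> nat \<Rightarrow> word set" where
  "G_rels m k =
     {[(i, False), (i+1, False), (i, True), (i+1, True)] | i. 1 \<le> i \<and> i \<le> m}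
   \<union> {[(m+j+1, False), (j, True), (m+j+1, True), (m+j, False)] | j. 1 \<le> j \<and> j \<le> k}"

definition G_mk :: "nat \<Rightarrow> nat \<Rightarrow> word set monoid" where
  "G_mk m k = presented_group (G_gens m k) (G_rels m k)"

end

theory Submission
  imports Defs
begin


lemma words_over_append[simp]: "u @ v \<in> words_over A \<longleftrightarrow> u \<in> words_over A \<and> v \<in> words_over A"
  by (auto simp: words_over_def)

lemma words_over_Cons[simp]: "l # v \<in> words_over A \<longleftrightarrow> fst l \<in> A \<and> v \<in> words_over A"
  by (auto simp: words_over_def)

lemma words_over_Nil[simp]: "[] \<in> words_over A"
  by (auto simp: words_over_def)

lemma inv_word_Cons: "inv_word ((i,b) # w) = inv_word w @ [(i, \<not> b)]"
  by (simp add: inv_word_def)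

lemma inv_word_Nil[simp]: "inv_word [] = []"
  by (simp add: inv_word_def)

lemma inv_word_words[simp]: "w \<in> words_over A \<Longrightarrow> inv_word w \<in> words_over A"
  by (auto simp: words_over_def inv_word_def)

lemma pres_eq_ctxt: "pres_eq A R u v \<Longrightarrow> pres_eq A R (x @ u @ y) (x @ v @ y)"
proof (induction rule: pres_eq.induct)
  case (pres_refl w) then show ?case by (rule pres_eq.pres_refl)
next
  case (pres_sym v w) then show ?case by (blast intro: pres_eq.pres_sym)
next
  case (pres_trans u v w) then show ?case by (blast intro: pres_eq.pres_trans)
next
  case (pres_cancel i u b v)
  then show ?case using pres_eq.pres_cancel[of i A R "x @ u" b "v @ y"] by simp
next
  case (pres_rel r u v)
  then show ?case using pres_eq.pres_rel[of r R A "x @ u" "v @ y"] by simp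
qed

lemma pres_eq_app: "pres_eq A R u u' \<Longrightarrow> pres_eq A R v v' \<Longrightarrow> pres_eq A R (u @ v) (u' @ v')"
proof -
  assume a: "pres_eq A R u u'" "pres_eq A R v v'"
  have "pres_eq A R ([] @ u @ v) ([] @ u' @ v)" by (rule pres_eq_ctxt[OF a(1)])
  moreover have "pres_eq A R (u' @ v @ []) (u' @ v' @ [])" by (rule pres_eq_ctxt[OF a(2)])
  ultimately show ?thesis by (auto intro: pres_eq.pres_trans)
qed

lemma inv_word_cancel: "w \<in> words_over A \<Longrightarrow> pres_eq A R (inv_word w @ w) []"
proof (induction w)
  case Nil then show ?case by (simp add: pres_eq.pres_refl)
next
  case (Cons l w)
  obtain i b where l: "l = (i,b)" by force
  have iA: "i \<in> A" using Cons l by simp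
  have "pres_eq A R (inv_word w @ [(i, \<not> b), (i, \<not> \<not> b)] @ w) (inv_word w @ w)"
    by (rule pres_eq.pres_cancel[OF iA])
  then have "pres_eq A R (inv_word (l # w) @ l # w) (inv_word w @ w)"
    by (simp add: l inv_word_Cons)
  then show ?case using Cons by (auto intro: pres_eq.pres_trans)
qed

lemma pres_class_mem: "w \<in> words_over A \<Longrightarrow> w \<in> pres_class A R w"
  by (simp add: pres_class_def pres_eq.pres_refl)

lemma pres_class_eqI: "pres_eq A R u v \<Longrightarrow> pres_class A R u = pres_class A R v"
proof -
  assume a: "pres_eq A R u v"
  have "pres_eq A R u w \<longleftrightarrow> pres_eq A R v w" for w
    using a pres_eq.pres_trans[of A R u v w] pres_eq.pres_trans[of A R v u w] pres_eq.pres_sym[OF a] by blast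
  then show ?thesis unfolding pres_class_def by simp
qed

lemma pres_class_eqD: "pres_class A R u = pres_class A R v \<Longrightarrow> v \<in> words_over A \<Longrightarrow> pres_eq A R u v"
  unfolding pres_class_def using pres_eq.pres_refl[of A R v] by blast

lemma pres_mult_class:
  assumes "x \<in> words_over A" "y \<in> words_over A"
  shows "pres_mult A R (pres_class A R x) (pres_class A R y) = pres_class A R (x @ y)"
proof -
  have "v \<in> pres_class A R (x @ y)"
    if "v \<in> words_over A" "x' \<in> pres_class A R x" "y' \<in> pres_class A R y" "pres_eq A R (x' @ y') v" for v x' y'
  proof -
    have "pres_eq A R x x'" "pres_eq A R y y'" using that by (auto simp: pres_class_def)
    then have "pres_eq A R (x @ y) (x' @ y')" by (rule pres_eq_app)
    then have "pres_eq A R (x @ y) v" using that(4) by (rule pres_eq.pres_trans)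
    then show ?thesis using that(1) by (simp add: pres_class_def)
  qed
  moreover have "v \<in> words_over A \<and> (\<exists>x'\<in>pres_class A R x. \<exists>y'\<in>pres_class A R y. pres_eq A R (x' @ y') v)"
    if "v \<in> pres_class A R (x @ y)" for v
  proof -
    have "v \<in> words_over A" "pres_eq A R (x @ y) v" using that by (simp_all add: pres_class_def)
    moreover have "x \<in> pres_class A R x" "y \<in> pres_class A R y"
      using assms by (simp_all add: pres_class_mem)
    ultimately show ?thesis by blast
  qed
  ultimately show ?thesis unfolding pres_mult_def by blast
qed

lemma presented_group_simps:
  "carrier (presented_group A R) = pres_class A R ` words_over A"
  "monoid.mult (presented_group A R) = pres_mult A R"
  "one (presented_group A R) = pres_class A R []"
  by (simp_all add: presented_group_def)

lemma pg_mult: "x \<in> words_over A \<Longrightarrow> y \<in> words_over A \<Longrightarrow>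
   pres_class A R x \<otimes>\<^bsub>presented_group A R\<^esub> pres_class A R y = pres_class A R (x @ y)"
  by (simp add: presented_group_simps pres_mult_class)

lemma group_presented: "group (presented_group A R)"
proof -
  let ?G = "presented_group A R"
  show ?thesis
proof (rule groupI)
  show "\<one>\<^bsub>?G\<^esub> \<in> carrier ?G" by (auto simp: presented_group_simps)
next
  fix x y assume "x \<in> carrier ?G" "y \<in> carrier ?G"
  then show "x \<otimes>\<^bsub>?G\<^esub> y \<in> carrier ?G"
    by (auto simp: presented_group_simps pres_mult_class intro!: imageI)
next
  fix x y z assume "x \<in> carrier ?G" "y \<in> carrier ?G" "z \<in> carrier ?G"
  then show "x \<otimes>\<^bsub>?G\<^esub> y \<otimes>\<^bsub>?G\<^esub> z = x \<otimes>\<^bsub>?G\<^esub> (y \<otimes>\<^bsub>?G\<^esub> z)"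
    by (auto simp: presented_group_simps pres_mult_class)
next
  fix x assume "x \<in> carrier ?G"
  then show "\<one>\<^bsub>?G\<^esub> \<otimes>\<^bsub>?G\<^esub> x = x"
    by (auto simp: presented_group_simps pres_mult_class)
next
  fix x assume "x \<in> carrier ?G"
  then obtain w where w: "w \<in> words_over A" "x = pres_class A R w" by (auto simp: presented_group_simps)
  have "pres_class A R (inv_word w) \<otimes>\<^bsub>?G\<^esub> x = \<one>\<^bsub>?G\<^esub>"
    using w by (simp add: pg_mult presented_group_simps(3) pres_class_eqI inv_word_cancel)
  moreover have "pres_class A R (inv_word w) \<in> carrier ?G" using w by (simp add: presented_group_simps)
  ultimately show "\<exists>y\<in>carrier ?G. y \<otimes>\<^bsub>?G\<^esub> x = \<one>\<^bsub>?G\<^esub>" by blast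
qed
qed

lemma pg_gen_carrier: "i \<in> A \<Longrightarrow> pres_gen A R i \<in> carrier (presented_group A R)"
  by (auto simp: pres_gen_def presented_group_simps words_over_def)

lemma pg_inv_gen: assumes "i \<in> A"
  shows "inv\<^bsub>presented_group A R\<^esub> pres_gen A R i = pres_class A R [(i, False)]"
proof -
  interpret group "presented_group A R" by (rule group_presented)
  have "pres_class A R [(i, False)] \<otimes>\<^bsub>presented_group A R\<^esub> pres_gen A R i = \<one>\<^bsub>presented_group A R\<^esub>"
    using assms pres_eq.pres_cancel[of i A R "[]" False "[]"]
    by (simp add: pres_gen_def pg_mult presented_group_simps(3) pres_class_eqI)
  moreover have "pres_class A R [(i, False)] \<in> carrier (presented_group A R)"
    using assms by (auto simp: presented_group_simps)
  ultimately show ?thesis using inv_equality pg_gen_carrier[OF assms] by blast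
qed

lemma pg_class_Cons:
  assumes "i \<in> A" "w \<in> words_over A"
  shows "pres_class A R ((i, b) # w) =
    (if b then pres_gen A R i else inv\<^bsub>presented_group A R\<^esub> pres_gen A R i) \<otimes>\<^bsub>presented_group A R\<^esub> pres_class A R w"
proof (cases b)
  case True
  then show ?thesis using assms pg_mult[of "[(i,True)]" A w R] by (simp add: pres_gen_def)
next
  case False
  then show ?thesis using assms pg_mult[of "[(i,False)]" A w R] by (simp add: pg_inv_gen)
qed

definition lval :: "('b, 'c) monoid_scheme \<Rightarrow> nat set \<Rightarrow> (nat \<Rightarrow> 'b) \<Rightarrow> letter \<Rightarrow> 'b" where
  "lval H A f l = (if fst l \<in> A then (if snd l then f (fst l) else inv\<^bsub>H\<^esub> f (fst l)) else \<one>\<^bsub>H\<^esub>)"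

fun evw :: "('b, 'c) monoid_scheme \<Rightarrow> nat set \<Rightarrow> (nat \<Rightarrow> 'b) \<Rightarrow> word \<Rightarrow> 'b" where
  "evw H A f [] = \<one>\<^bsub>H\<^esub>"
| "evw H A f (l # w) = lval H A f l \<otimes>\<^bsub>H\<^esub> evw H A f w"

definition pext :: "('b, 'c) monoid_scheme \<Rightarrow> nat set \<Rightarrow> word set \<Rightarrow> (nat \<Rightarrow> 'b) \<Rightarrow> word set \<Rightarrow> 'b" where
  "pext H A R f U = evw H A f (SOME w. w \<in> U)"

context group
begin

lemma lval_closed: "\<forall>i\<in>A. f i \<in> carrier G \<Longrightarrow> lval G A f l \<in> carrier G"
  by (auto simp: lval_def)

lemma evw_closed: "\<forall>i\<in>A. f i \<in> carrier G \<Longrightarrow> evw G A f w \<in> carrier G"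
  by (induction w) (auto simp: lval_closed)

lemma evw_append: "\<forall>i\<in>A. f i \<in> carrier G \<Longrightarrow> evw G A f (u @ v) = evw G A f u \<otimes> evw G A f v"
  by (induction u) (auto simp: lval_closed evw_closed m_assoc)

lemma evw_pres_eq:
  assumes f: "\<forall>i\<in>A. f i \<in> carrier G" and R: "\<forall>r\<in>R. evw G A f r = \<one>"
  shows "pres_eq A R u v \<Longrightarrow> evw G A f u = evw G A f v"
proof (induction rule: pres_eq.induct)
  case (pres_cancel i u b v)
  have "evw G A f ([(i, b), (i, \<not> b)]) = \<one>"
    using f pres_cancel by (cases b) (auto simp: lval_def)
  then show ?case using f by (simp only: evw_append) (simp add: evw_closed)
next
  case (pres_rel r u v)
  then show ?case using f R by (simp only: evw_append) (simp add: evw_closed)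
qed auto

lemma pext_class:
  assumes f: "\<forall>i\<in>A. f i \<in> carrier G" and R: "\<forall>r\<in>R. evw G A f r = \<one>"
    and w: "w \<in> words_over A"
  shows "pext G A R f (pres_class A R w) = evw G A f w"
proof -
  have "(SOME v. v \<in> pres_class A R w) \<in> pres_class A R w"
    using pres_class_mem[OF w] by (rule someI)
  then have "pres_eq A R w (SOME v. v \<in> pres_class A R w)" by (simp add: pres_class_def)
  then show ?thesis unfolding pext_def using evw_pres_eq[OF f R] by metis
qed

lemma pext_hom:
  assumes f: "\<forall>i\<in>A. f i \<in> carrier G" and R: "\<forall>r\<in>R. evw G A f r = \<one>"
  shows "pext G A R f \<in> hom (presented_group A R) G"
proof (rule homI)
  fix x assume "x \<in> carrier (presented_group A R)"
  then obtain w where "w \<in> words_over A" "x = pres_class A R w" by (auto simp: presented_group_simps)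
  then show "pext G A R f x \<in> carrier G" using pext_class[OF f R] evw_closed[OF f] by simp
next
  fix x y assume "x \<in> carrier (presented_group A R)" "y \<in> carrier (presented_group A R)"
  then obtain u v where "u \<in> words_over A" "x = pres_class A R u" "v \<in> words_over A" "y = pres_class A R v"
    by (auto simp: presented_group_simps)
  then show "pext G A R f (x \<otimes>\<^bsub>presented_group A R\<^esub> y) = pext G A R f x \<otimes> pext G A R f y"
    using pext_class[OF f R] evw_append[OF f] by (simp add: pg_mult)
qed

lemma pext_gen:
  assumes f: "\<forall>i\<in>A. f i \<in> carrier G" and R: "\<forall>r\<in>R. evw G A f r = \<one>" and i: "i \<in> A"
  shows "pext G A R f (pres_gen A R i) = f i"
  using pext_class[OF f R, of "[(i,True)]"] i f by (simp add: pres_gen_def lval_def words_over_def)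

lemma pg_hom_unique:
  assumes h1: "h1 \<in> hom (presented_group A R) G" and h2: "h2 \<in> hom (presented_group A R) G"
    and eq: "\<forall>i\<in>A. h1 (pres_gen A R i) = h2 (pres_gen A R i)"
    and x: "x \<in> carrier (presented_group A R)"
  shows "h1 x = h2 x"
proof -
  interpret P: group "presented_group A R" by (rule group_presented)
  interpret H1: group_hom "presented_group A R" G h1 by (unfold_locales) (rule h1)
  interpret H2: group_hom "presented_group A R" G h2 by (unfold_locales) (rule h2)
  have "w \<in> words_over A \<Longrightarrow> h1 (pres_class A R w) = h2 (pres_class A R w)" for w
  proof (induction w)
    case Nil
    then show ?case using H1.hom_one H2.hom_one by (simp add: presented_group_simps)
  next
    case (Cons l w)
    obtain i b where l: "l = (i, b)" by force
    have i: "i \<in> A" and w: "w \<in> words_over A" using Cons l by auto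
    have cw: "pres_class A R w \<in> carrier (presented_group A R)" using w by (auto simp: presented_group_simps)
    have g: "pres_gen A R i \<in> carrier (presented_group A R)" by (rule pg_gen_carrier[OF i])
    show ?case using Cons.IH[OF w] eq i cw g
      by (simp add: l pg_class_Cons[OF i w] H1.hom_inv H2.hom_inv)
  qed
  then show ?thesis using x by (auto simp: presented_group_simps)
qed

end



definition apow :: "('a \<Rightarrow> 'a) \<Rightarrow> ('a \<Rightarrow> 'a) \<Rightarrow> int \<Rightarrow> 'a \<Rightarrow> 'a" where
  "apow al be a = (if 0 \<le> a then al ^^ nat a else be ^^ nat (- a))"

definition sdp :: "('a, 'c) monoid_scheme \<Rightarrow> ('a \<Rightarrow> 'a) \<Rightarrow> ('a \<Rightarrow> 'a) \<Rightarrow> ('a \<times> int) monoid" where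
  "sdp F al be = \<lparr>carrier = carrier F \<times> UNIV,
     monoid.mult = (\<lambda>p q. (fst p \<otimes>\<^bsub>F\<^esub> apow al be (snd p) (fst q), snd p + snd q)),
     one = (\<one>\<^bsub>F\<^esub>, 0)\<rparr>"

locale autgrp = group F for F (structure) +
  fixes al be
  assumes al_hom: "al \<in> hom F F" and be_hom: "be \<in> hom F F"
    and al_be: "x \<in> carrier F \<Longrightarrow> al (be x) = x"
    and be_al: "x \<in> carrier F \<Longrightarrow> be (al x) = x"
begin

lemma al_closed[simp]: "x \<in> carrier F \<Longrightarrow> al x \<in> carrier F"
  using al_hom by (auto simp: hom_def)
lemma be_closed[simp]: "x \<in> carrier F \<Longrightarrow> be x \<in> carrier F"
  using be_hom by (auto simp: hom_def)
lemma al_mult: "x \<in> carrier F \<Longrightarrow> y \<in> carrier F \<Longrightarrow> al (x \<otimes> y) = al x \<otimes> al y"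
  using al_hom by (auto simp: hom_def)
lemma be_mult: "x \<in> carrier F \<Longrightarrow> y \<in> carrier F \<Longrightarrow> be (x \<otimes> y) = be x \<otimes> be y"
  using be_hom by (auto simp: hom_def)

lemma funpow_closed: "(\<forall>x\<in>carrier F. f x \<in> carrier F) \<Longrightarrow> x \<in> carrier F \<Longrightarrow> (f ^^ n) x \<in> carrier F"
  by (induction n) auto

lemma funpow_mult: "(\<forall>x\<in>carrier F. f x \<in> carrier F) \<Longrightarrow>
   (\<forall>x\<in>carrier F. \<forall>y\<in>carrier F. f (x \<otimes> y) = f x \<otimes> f y) \<Longrightarrow>
   x \<in> carrier F \<Longrightarrow> y \<in> carrier F \<Longrightarrow> (f ^^ n) (x \<otimes> y) = (f ^^ n) x \<otimes> (f ^^ n) y"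
  by (induction n) (auto simp: funpow_closed)

lemma apow_closed[simp]: "x \<in> carrier F \<Longrightarrow> apow al be a x \<in> carrier F"
  by (auto simp: apow_def intro!: funpow_closed)

lemma apow_mult: "x \<in> carrier F \<Longrightarrow> y \<in> carrier F \<Longrightarrow> apow al be a (x \<otimes> y) = apow al be a x \<otimes> apow al be a y"
  by (auto simp: apow_def al_mult be_mult intro!: funpow_mult)

lemma apow_0[simp]: "apow al be 0 x = x"
  by (simp add: apow_def)

lemma apow_one[simp]: "apow al be a \<one> = \<one>"
proof -
  have "apow al be a \<one> \<otimes> apow al be a \<one> = apow al be a \<one> \<otimes> \<one>"
    using apow_mult[of \<one> \<one> a] by simp
  then show ?thesis using l_cancel[of "apow al be a \<one>" "apow al be a \<one>" \<one>] by simp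
qed

lemma apow_succ: "apow al be (a + 1) x = al (apow al be a x)" if "x \<in> carrier F"
proof (cases "0 \<le> a")
  case True
  then have "nat (a + 1) = Suc (nat a)" by simp
  then show ?thesis using True by (simp add: apow_def)
next
  case False
  then have e: "nat (- a) = Suc (nat (- (a + 1)))" by simp
  have "apow al be (a + 1) x = (be ^^ nat (- (a + 1))) x"
    using False by (cases "a + 1 = 0") (auto simp: apow_def)
  moreover have "apow al be a x = be ((be ^^ nat (- (a + 1))) x)"
    using False e by (simp add: apow_def)
  moreover have "(be ^^ nat (- (a + 1))) x \<in> carrier F" using funpow_closed[of be x] that by simp
  ultimately show ?thesis using al_be by simp
qed

lemma apow_pred: "apow al be (a - 1) x = be (apow al be a x)" if "x \<in> carrier F"
proof (cases "a \<le> 0")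
  case True
  then have "nat (- (a - 1)) = Suc (nat (- a))" by simp
  moreover have "apow al be a x = (be ^^ nat (- a)) x"
    using True by (cases "a = 0") (auto simp: apow_def)
  ultimately show ?thesis using True by (simp add: apow_def)
next
  case False
  then have e: "nat a = Suc (nat (a - 1))" by simp
  have "apow al be (a - 1) x = (al ^^ nat (a - 1)) x"
    using False by (simp add: apow_def)
  moreover have "apow al be a x = al ((al ^^ nat (a - 1)) x)"
    using False e by (simp add: apow_def)
  moreover have "(al ^^ nat (a - 1)) x \<in> carrier F" using funpow_closed[of al x] that by simp
  ultimately show ?thesis using be_al by simp
qed

lemma apow_add: "x \<in> carrier F \<Longrightarrow> apow al be a (apow al be b x) = apow al be (a + b) x"
proof (induction a rule: int_induct[where k = 0])
  case base then show ?case by simp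
next
  case (step1 i)
  then show ?case using apow_succ[of "apow al be b x" i] apow_succ[of x "i + b"]
    by (simp add: algebra_simps)
next
  case (step2 i)
  then show ?case using apow_pred[of "apow al be b x" i] apow_pred[of x "i + b"]
    by (simp add: algebra_simps)
qed

lemma sdp_simps:
  "carrier (sdp F al be) = carrier F \<times> UNIV"
  "(x, a) \<otimes>\<^bsub>sdp F al be\<^esub> (y, b) = (x \<otimes> apow al be a y, a + b)"
  "\<one>\<^bsub>sdp F al be\<^esub> = (\<one>, 0)"
  by (simp_all add: sdp_def)

lemma group_sdp: "group (sdp F al be)"
proof (rule groupI)
  fix p q assume "p \<in> carrier (sdp F al be)" "q \<in> carrier (sdp F al be)"
  then show "p \<otimes>\<^bsub>sdp F al be\<^esub> q \<in> carrier (sdp F al be)"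
    by (cases p, cases q) (auto simp: sdp_simps)
next
  show "\<one>\<^bsub>sdp F al be\<^esub> \<in> carrier (sdp F al be)" by (simp add: sdp_simps)
next
  fix p q r assume "p \<in> carrier (sdp F al be)" "q \<in> carrier (sdp F al be)" "r \<in> carrier (sdp F al be)"
  then show "p \<otimes>\<^bsub>sdp F al be\<^esub> q \<otimes>\<^bsub>sdp F al be\<^esub> r = p \<otimes>\<^bsub>sdp F al be\<^esub> (q \<otimes>\<^bsub>sdp F al be\<^esub> r)"
    by (cases p, cases q, cases r) (auto simp: sdp_simps apow_mult apow_add m_assoc add.assoc)
next
  fix p assume "p \<in> carrier (sdp F al be)"
  then show "\<one>\<^bsub>sdp F al be\<^esub> \<otimes>\<^bsub>sdp F al be\<^esub> p = p"
    by (cases p) (auto simp: sdp_simps)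
next
  fix p assume "p \<in> carrier (sdp F al be)"
  then obtain x a where p: "p = (x, a)" "x \<in> carrier F" by (auto simp: sdp_simps)
  have "(apow al be (- a) (inv x), - a) \<otimes>\<^bsub>sdp F al be\<^esub> p = \<one>\<^bsub>sdp F al be\<^esub>"
    using p by (simp add: sdp_simps apow_mult[symmetric])
  moreover have "(apow al be (- a) (inv x), - a) \<in> carrier (sdp F al be)"
    using p by (simp add: sdp_simps)
  ultimately show "\<exists>q\<in>carrier (sdp F al be). q \<otimes>\<^bsub>sdp F al be\<^esub> p = \<one>\<^bsub>sdp F al be\<^esub>" by blast
qed

end



lemma (in group) gcancel1[simp]: "x \<in> carrier G \<Longrightarrow> y \<in> carrier G \<Longrightarrow> x \<otimes> (inv x \<otimes> y) = y"
  by (simp add: m_assoc[symmetric])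
lemma (in group) gcancel2[simp]: "x \<in> carrier G \<Longrightarrow> y \<in> carrier G \<Longrightarrow> inv x \<otimes> (x \<otimes> y) = y"
  by (simp add: m_assoc[symmetric])

lemma hom_compI: "f \<in> hom G H \<Longrightarrow> g \<in> hom H K \<Longrightarrow> (\<lambda>x. g (f x)) \<in> hom G K"
  by (simp add: hom_def Pi_iff)

lemma hom_idI: "(\<lambda>x. x) \<in> hom G G"
  by (auto simp: hom_def)

locale MK = fixes m k :: nat
begin

definition FA :: "nat set" where "FA = {1..m+k}"
lemma mem_FA[simp]: "j \<in> FA \<longleftrightarrow> 1 \<le> j \<and> j \<le> m + k" by (auto simp: FA_def)
abbreviation "FF \<equiv> presented_group FA ({} :: word set)"

lemma grpF: "group FF" by (rule group_presented)

sublocale F: group FF by (rule grpF)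

definition Bg :: "nat \<Rightarrow> word set" where
  "Bg i = (if 2 \<le> i then pres_gen FA {} (i - 1) else \<one>\<^bsub>FF\<^esub>)"

definition pp :: "nat \<Rightarrow> nat" where
  "pp i = (if i \<le> m + 1 then i - 1 else i - m - 1)"

lemma pp_lt: "2 \<le> i \<Longrightarrow> pp i < i" by (auto simp: pp_def)
lemma pp_ge: "2 \<le> i \<Longrightarrow> 1 \<le> pp i" by (auto simp: pp_def)

fun Aimg :: "nat \<Rightarrow> word set" where
  "Aimg 0 = \<one>\<^bsub>FF\<^esub>"
| "Aimg (Suc i) = (if i = 0 then \<one>\<^bsub>FF\<^esub> else inv\<^bsub>FF\<^esub> (Bg (pp (Suc i))) \<otimes>\<^bsub>FF\<^esub> Bg (Suc i) \<otimes>\<^bsub>FF\<^esub> Aimg i)"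

function Bimg :: "nat \<Rightarrow> word set" where
  "Bimg i = (if i \<le> 1 then \<one>\<^bsub>FF\<^esub> else Bimg (pp i) \<otimes>\<^bsub>FF\<^esub> Bg i \<otimes>\<^bsub>FF\<^esub> inv\<^bsub>FF\<^esub> (Bg (i - 1)))"
  by auto
termination by (relation "measure (\<lambda>i. i)") (auto simp: pp_def)

declare Bimg.simps[simp del]

lemma Bg_closed[simp]: "i \<le> m + k + 1 \<Longrightarrow> Bg i \<in> carrier FF"
  by (auto simp: Bg_def intro!: pg_gen_carrier)

lemma Bg_1[simp]: "Bg (Suc 0) = \<one>\<^bsub>FF\<^esub>" by (simp add: Bg_def)

lemma Aimg_closed[simp]: "i \<le> m + k + 1 \<Longrightarrow> Aimg i \<in> carrier FF"
proof (induction i)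
  case (Suc i)
  then show ?case using pp_lt[of "Suc i"] by auto
qed simp

lemma Bimg_closed[simp]: "i \<le> m + k + 1 \<Longrightarrow> Bimg i \<in> carrier FF"
proof (induction i rule: less_induct)
  case (less i)
  show ?case
  proof (cases "i \<le> 1")
    case True then show ?thesis by (simp add: Bimg.simps)
  next
    case False
    then have "Bimg (pp i) \<in> carrier FF" using less pp_lt[of i] by simp
    then show ?thesis using False less.prems by (simp add: Bimg.simps[of i])
  qed
qed

lemma Aimg_step: "2 \<le> i \<Longrightarrow> Aimg i = inv\<^bsub>FF\<^esub> (Bg (pp i)) \<otimes>\<^bsub>FF\<^esub> Bg i \<otimes>\<^bsub>FF\<^esub> Aimg (i - 1)"
  by (cases i) auto

lemma Bimg_step: "2 \<le> i \<Longrightarrow> Bimg i = Bimg (pp i) \<otimes>\<^bsub>FF\<^esub> Bg i \<otimes>\<^bsub>FF\<^esub> inv\<^bsub>FF\<^esub> (Bg (i - 1))"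
  by (simp add: Bimg.simps[of i])

definition al :: "word set \<Rightarrow> word set" where
  "al = pext FF FA {} (\<lambda>j. Aimg (j + 1))"
definition be :: "word set \<Rightarrow> word set" where
  "be = pext FF FA {} (\<lambda>j. Bimg (j + 1))"

lemma al_hom: "al \<in> hom FF FF"
  unfolding al_def by (rule F.pext_hom) (auto simp del: Aimg.simps)
lemma be_hom: "be \<in> hom FF FF"
  unfolding be_def by (rule F.pext_hom) (auto simp del: Aimg.simps)

lemma al_gen: "j \<in> FA \<Longrightarrow> al (pres_gen FA {} j) = Aimg (j + 1)"
  unfolding al_def by (rule F.pext_gen) (auto simp del: Aimg.simps)
lemma be_gen: "j \<in> FA \<Longrightarrow> be (pres_gen FA {} j) = Bimg (j + 1)"
  unfolding be_def by (rule F.pext_gen) (auto simp del: Aimg.simps)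

sublocale AL: group_hom FF FF al by unfold_locales (rule al_hom)
sublocale BE: group_hom FF FF be by unfold_locales (rule be_hom)

lemma al_B: "1 \<le> i \<Longrightarrow> i \<le> m + k + 1 \<Longrightarrow> al (Bg i) = Aimg i"
proof (cases "i = 1")
  case True then show ?thesis by simp
next
  case False
  assume "1 \<le> i" "i \<le> m + k + 1"
  then have "i - 1 \<in> FA" "2 \<le> i" "i - 1 + 1 = i" using False by auto
  then show ?thesis using al_gen[of "i - 1"] by (simp add: Bg_def del: mem_FA)
qed

lemma be_B: "1 \<le> i \<Longrightarrow> i \<le> m + k + 1 \<Longrightarrow> be (Bg i) = Bimg i"
proof (cases "i = 1")
  case True then show ?thesis by (simp add: Bimg.simps)
next
  case False
  assume "1 \<le> i" "i \<le> m + k + 1"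
  then have "i - 1 \<in> FA" "2 \<le> i" "i - 1 + 1 = i" using False by auto
  then show ?thesis using be_gen[of "i - 1"] by (simp add: Bg_def del: mem_FA)
qed

lemma al_be_B: "1 \<le> i \<Longrightarrow> i \<le> m + k + 1 \<Longrightarrow> al (be (Bg i)) = Bg i"
proof (induction i rule: less_induct)
  case (less i)
  show ?case
  proof (cases "i = 1")
    case True then show ?thesis by simp
  next
    case False
    then have i2: "2 \<le> i" using less.prems by simp
    have IH: "al (Bimg (pp i)) = Bg (pp i)"
      using less.IH[of "pp i"] pp_lt[OF i2] pp_ge[OF i2] less.prems be_B[of "pp i"] by simp
    have "al (be (Bg i)) = al (Bimg i)" using be_B less.prems by simp
    also have "\<dots> = Bg (pp i) \<otimes>\<^bsub>FF\<^esub> Aimg i \<otimes>\<^bsub>FF\<^esub> inv\<^bsub>FF\<^esub> Aimg (i - 1)"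
      using i2 less.prems pp_lt[OF i2] pp_ge[OF i2] IH
      by (simp add: Bimg_step[OF i2] al_B)
    also have "\<dots> = Bg i"
      using i2 less.prems pp_lt[OF i2]
      by (simp add: Aimg_step[OF i2] F.m_assoc)
    finally show ?thesis .
  qed
qed

lemma be_al_B: "1 \<le> i \<Longrightarrow> i \<le> m + k + 1 \<Longrightarrow> be (al (Bg i)) = Bg i"
proof (induction i rule: less_induct)
  case (less i)
  show ?case
  proof (cases "i = 1")
    case True then show ?thesis by simp
  next
    case False
    then have i2: "2 \<le> i" using less.prems by simp
    have IH: "be (Aimg (i - 1)) = Bg (i - 1)"
      using less.IH[of "i - 1"] less.prems i2 al_B[of "i - 1"] by simp
    have "be (al (Bg i)) = be (Aimg i)" using al_B less.prems by simp
    also have "\<dots> = inv\<^bsub>FF\<^esub> Bimg (pp i) \<otimes>\<^bsub>FF\<^esub> Bimg i \<otimes>\<^bsub>FF\<^esub> Bg (i - 1)"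
      using i2 less.prems pp_lt[OF i2] pp_ge[OF i2] IH
      by (simp add: Aimg_step[OF i2] be_B)
    also have "\<dots> = Bg i"
      using i2 less.prems pp_lt[OF i2]
      by (simp add: Bimg_step[OF i2] F.m_assoc)
    finally show ?thesis .
  qed
qed

lemma gen_as_B: "j \<in> FA \<Longrightarrow> pres_gen FA {} j = Bg (j + 1)"
  by (simp add: Bg_def)

lemma al_be: "x \<in> carrier FF \<Longrightarrow> al (be x) = x"
  using F.pg_hom_unique[OF hom_compI[OF be_hom al_hom] hom_idI, of x]
  using al_be_B by (simp add: gen_as_B)

lemma be_al: "x \<in> carrier FF \<Longrightarrow> be (al x) = x"
  using F.pg_hom_unique[OF hom_compI[OF al_hom be_hom] hom_idI, of x]
  using be_al_B by (simp add: gen_as_B)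

sublocale AG: autgrp FF al be
  by unfold_locales (auto simp: al_hom be_hom al_be be_al)

end



lemma (in group) inv_mult_one_iff:
  "u \<in> carrier G \<Longrightarrow> v \<in> carrier G \<Longrightarrow> inv u \<otimes> v = \<one> \<longleftrightarrow> v = u"
proof
  assume c: "u \<in> carrier G" "v \<in> carrier G" and e: "inv u \<otimes> v = \<one>"
  have "v = u \<otimes> (inv u \<otimes> v)" using c by simp
  also have "\<dots> = u" using e c by simp
  finally show "v = u" .
qed simp

lemma (in group) mult_inv_one_iff:
  "u \<in> carrier G \<Longrightarrow> v \<in> carrier G \<Longrightarrow> u \<otimes> inv v = \<one> \<longleftrightarrow> u = v"
proof
  assume c: "u \<in> carrier G" "v \<in> carrier G" and e: "u \<otimes> inv v = \<one>"
  have "u = (u \<otimes> inv v) \<otimes> v" using c by (simp add: m_assoc)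
  also have "\<dots> = v" using e c by simp
  finally show "u = v" .
qed simp

lemma (in group) comm_rel_iff:
  "x \<in> carrier G \<Longrightarrow> y \<in> carrier G \<Longrightarrow>
   inv x \<otimes> (inv y \<otimes> (x \<otimes> (y \<otimes> \<one>))) = \<one> \<longleftrightarrow> x \<otimes> y = y \<otimes> x"
proof -
  assume c: "x \<in> carrier G" "y \<in> carrier G"
  have "inv x \<otimes> (inv y \<otimes> (x \<otimes> (y \<otimes> \<one>))) = inv (y \<otimes> x) \<otimes> (x \<otimes> y)"
    using c by (simp add: inv_mult_group m_assoc)
  also have "\<dots> = \<one> \<longleftrightarrow> x \<otimes> y = y \<otimes> x"
    using c by (simp add: inv_mult_one_iff)
  finally show ?thesis .
qed

lemma (in group) conj_rel_iff:
  "x \<in> carrier G \<Longrightarrow> y \<in> carrier G \<Longrightarrow> z \<in> carrier G \<Longrightarrow>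
   inv z \<otimes> (x \<otimes> (z \<otimes> (inv y \<otimes> \<one>))) = \<one> \<longleftrightarrow> x \<otimes> z = z \<otimes> y"
proof -
  assume c: "x \<in> carrier G" "y \<in> carrier G" "z \<in> carrier G"
  have "inv z \<otimes> (x \<otimes> (z \<otimes> (inv y \<otimes> \<one>))) = inv z \<otimes> (x \<otimes> z) \<otimes> inv y"
    using c by (simp add: m_assoc)
  also have "\<dots> = \<one> \<longleftrightarrow> inv z \<otimes> (x \<otimes> z) = y"
    using c by (simp add: mult_inv_one_iff)
  also have "\<dots> \<longleftrightarrow> x \<otimes> z = z \<otimes> y"
    using c by (metis gcancel1 gcancel2 m_closed inv_closed)
  finally show ?thesis .
qed
lemma (in group) swap4:
  "x \<in> carrier G \<Longrightarrow> y \<in> carrier G \<Longrightarrow> z \<in> carrier G \<Longrightarrow> w \<in> carrier G \<Longrightarrow> u \<in> carrier G \<Longrightarrow>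
   x \<otimes> y = z \<otimes> w \<Longrightarrow> x \<otimes> (y \<otimes> u) = z \<otimes> (w \<otimes> u)"
  by (simp add: m_assoc[symmetric])

context MK
begin

abbreviation "GA \<equiv> G_gens m k"
abbreviation "GR \<equiv> G_rels m k"
abbreviation "GG \<equiv> presented_group GA GR"
abbreviation "SS \<equiv> sdp FF al be"

lemma mem_GA[simp]: "i \<in> G_gens m k \<longleftrightarrow> 1 \<le> i \<and> i \<le> m + k + 1"
  by (auto simp: G_gens_def)

sublocale G: group GG by (rule group_presented)
sublocale S: group SS by (rule AG.group_sdp)

definition ag :: "nat \<Rightarrow> word set" where "ag i = pres_gen GA GR i"
abbreviation "tt \<equiv> ag 1"

lemma ag_closed[simp]: "1 \<le> i \<Longrightarrow> i \<le> m + k + 1 \<Longrightarrow> ag i \<in> carrier GG"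
  unfolding ag_def by (rule pg_gen_carrier) simp

lemma tt_closed[simp]: "tt \<in> carrier GG" by simp

lemma rel_one: "r \<in> GR \<Longrightarrow> pres_class GA GR r = \<one>\<^bsub>GG\<^esub>"
  using pres_eq.pres_rel[of r GR GA "[]" "[]"] by (simp add: pres_class_eqI presented_group_simps)

lemma comm_G: "1 \<le> i \<Longrightarrow> i \<le> m \<Longrightarrow> ag i \<otimes>\<^bsub>GG\<^esub> ag (i+1) = ag (i+1) \<otimes>\<^bsub>GG\<^esub> ag i"
proof -
  assume i: "1 \<le> i" "i \<le> m"
  let ?r = "[(i, False), (i+1, False), (i, True), (i+1, True)]"
  have "?r \<in> {[(i, False), (i+1, False), (i, True), (i+1, True)] | i. 1 \<le> i \<and> i \<le> m}"
    using i by (simp only: mem_Collect_eq) (rule exI[of _ i], simp)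
  then have "?r \<in> GR" unfolding G_rels_def by (rule UnI1)
  then have A: "pres_class GA GR ?r = \<one>\<^bsub>GG\<^esub>" by (rule rel_one)
  have B: "pres_class GA GR ?r = inv\<^bsub>GG\<^esub> ag i \<otimes>\<^bsub>GG\<^esub> (inv\<^bsub>GG\<^esub> ag (i+1) \<otimes>\<^bsub>GG\<^esub> (ag i \<otimes>\<^bsub>GG\<^esub> (ag (i+1) \<otimes>\<^bsub>GG\<^esub> \<one>\<^bsub>GG\<^esub>)))"
    using i by (simp add: pg_class_Cons ag_def presented_group_simps(3))
  have c: "ag i \<in> carrier GG" "ag (i+1) \<in> carrier GG" using i by simp_all
  from B[symmetric] A show ?thesis using G.comm_rel_iff[OF c] by (metis trans)
qed

lemma conj_G: "1 \<le> j \<Longrightarrow> j \<le> k \<Longrightarrow> ag j \<otimes>\<^bsub>GG\<^esub> ag (m+j+1) = ag (m+j+1) \<otimes>\<^bsub>GG\<^esub> ag (m+j)"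
proof -
  assume j: "1 \<le> j" "j \<le> k"
  let ?r = "[(m+j+1, False), (j, True), (m+j+1, True), (m+j, False)]"
  have "?r \<in> {[(m+j+1, False), (j, True), (m+j+1, True), (m+j, False)] | j. 1 \<le> j \<and> j \<le> k}"
    using j by (simp only: mem_Collect_eq) (rule exI[of _ j], simp)
  then have "?r \<in> GR" unfolding G_rels_def by (rule UnI2)
  then have A: "pres_class GA GR ?r = \<one>\<^bsub>GG\<^esub>" by (rule rel_one)
  have B: "pres_class GA GR ?r = inv\<^bsub>GG\<^esub> ag (m+j+1) \<otimes>\<^bsub>GG\<^esub> (ag j \<otimes>\<^bsub>GG\<^esub> (ag (m+j+1) \<otimes>\<^bsub>GG\<^esub> (inv\<^bsub>GG\<^esub> ag (m+j) \<otimes>\<^bsub>GG\<^esub> \<one>\<^bsub>GG\<^esub>)))"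
    using j by (simp add: pg_class_Cons ag_def presented_group_simps(3))
  have c: "ag j \<in> carrier GG" "ag (m+j) \<in> carrier GG" "ag (m+j+1) \<in> carrier GG" using j by simp_all
  from B[symmetric] A show ?thesis using G.conj_rel_iff[OF c] by (metis trans)
qed

lemma rel_G: "2 \<le> i \<Longrightarrow> i \<le> m + k + 1 \<Longrightarrow> ag i \<otimes>\<^bsub>GG\<^esub> ag (i - 1) = ag (pp i) \<otimes>\<^bsub>GG\<^esub> ag i"
proof (cases "i \<le> m + 1")
  case True
  assume "2 \<le> i" "i \<le> m + k + 1"
  then show ?thesis using True comm_G[of "i - 1"] by (simp add: pp_def)
next
  case False
  assume "2 \<le> i" "i \<le> m + k + 1"
  then show ?thesis using False conj_G[of "i - m - 1"] by (simp add: pp_def)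
qed

end



lemma (in group) conj_hom: "g \<in> carrier G \<Longrightarrow> (\<lambda>x. g \<otimes> x \<otimes> inv g) \<in> hom G G"
  by (rule homI) (simp_all add: m_assoc)

context MK
begin

definition th :: "word set \<Rightarrow> word set" where
  "th = pext GG FA {} (\<lambda>j. ag (j + 1) \<otimes>\<^bsub>GG\<^esub> inv\<^bsub>GG\<^esub> tt)"

lemma th_hom: "th \<in> hom FF GG"
  unfolding th_def by (rule G.pext_hom) auto

sublocale TH: group_hom FF GG th by unfold_locales (rule th_hom)

lemma th_gen: "j \<in> FA \<Longrightarrow> th (pres_gen FA {} j) = ag (j + 1) \<otimes>\<^bsub>GG\<^esub> inv\<^bsub>GG\<^esub> tt"
  unfolding th_def by (rule G.pext_gen) auto

lemma th_B: "1 \<le> i \<Longrightarrow> i \<le> m + k + 1 \<Longrightarrow> th (Bg i) = ag i \<otimes>\<^bsub>GG\<^esub> inv\<^bsub>GG\<^esub> tt"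
proof (cases "i = 1")
  case True then show ?thesis by simp
next
  case False
  assume "1 \<le> i" "i \<le> m + k + 1"
  then have "i - 1 \<in> FA" "i - 1 + 1 = i" using False by auto
  then show ?thesis using th_gen[of "i - 1"] gen_as_B[of "i - 1"] by (simp del: mem_FA)
qed

lemma th_Aimg: "1 \<le> i \<Longrightarrow> i \<le> m + k + 1 \<Longrightarrow>
  th (Aimg i) = tt \<otimes>\<^bsub>GG\<^esub> (ag i \<otimes>\<^bsub>GG\<^esub> (inv\<^bsub>GG\<^esub> tt \<otimes>\<^bsub>GG\<^esub> inv\<^bsub>GG\<^esub> tt))"
proof (induction i rule: less_induct)
  case (less i)
  show ?case
  proof (cases "i = 1")
    case True then show ?thesis by (simp add: G.m_assoc[symmetric])
  next
    case False
    then have i2: "2 \<le> i" using less.prems by simp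
    note pl = pp_lt[OF i2] pp_ge[OF i2]
    have IH: "th (Aimg (i - 1)) = tt \<otimes>\<^bsub>GG\<^esub> (ag (i - 1) \<otimes>\<^bsub>GG\<^esub> (inv\<^bsub>GG\<^esub> tt \<otimes>\<^bsub>GG\<^esub> inv\<^bsub>GG\<^esub> tt))"
      using less.IH[of "i - 1"] i2 less.prems by simp
    have "th (Aimg i) = th (inv\<^bsub>FF\<^esub> (Bg (pp i))) \<otimes>\<^bsub>GG\<^esub> th (Bg i) \<otimes>\<^bsub>GG\<^esub> th (Aimg (i - 1))"
      using i2 less.prems pl by (simp add: Aimg_step[OF i2])
    also have "\<dots> = tt \<otimes>\<^bsub>GG\<^esub> (inv\<^bsub>GG\<^esub> ag (pp i) \<otimes>\<^bsub>GG\<^esub> (ag i \<otimes>\<^bsub>GG\<^esub> (ag (i - 1) \<otimes>\<^bsub>GG\<^esub> (inv\<^bsub>GG\<^esub> tt \<otimes>\<^bsub>GG\<^esub> inv\<^bsub>GG\<^esub> tt))))"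
      using i2 less.prems pl IH by (simp add: th_B G.inv_mult_group G.m_assoc)
    also have "ag i \<otimes>\<^bsub>GG\<^esub> (ag (i - 1) \<otimes>\<^bsub>GG\<^esub> (inv\<^bsub>GG\<^esub> tt \<otimes>\<^bsub>GG\<^esub> inv\<^bsub>GG\<^esub> tt))
       = ag (pp i) \<otimes>\<^bsub>GG\<^esub> (ag i \<otimes>\<^bsub>GG\<^esub> (inv\<^bsub>GG\<^esub> tt \<otimes>\<^bsub>GG\<^esub> inv\<^bsub>GG\<^esub> tt))"
      using i2 less.prems pl by (intro G.swap4 rel_G) simp_all
    also have "tt \<otimes>\<^bsub>GG\<^esub> (inv\<^bsub>GG\<^esub> ag (pp i) \<otimes>\<^bsub>GG\<^esub> (ag (pp i) \<otimes>\<^bsub>GG\<^esub> (ag i \<otimes>\<^bsub>GG\<^esub> (inv\<^bsub>GG\<^esub> tt \<otimes>\<^bsub>GG\<^esub> inv\<^bsub>GG\<^esub> tt))))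
       = tt \<otimes>\<^bsub>GG\<^esub> (ag i \<otimes>\<^bsub>GG\<^esub> (inv\<^bsub>GG\<^esub> tt \<otimes>\<^bsub>GG\<^esub> inv\<^bsub>GG\<^esub> tt))"
      using i2 less.prems pl by simp
    finally show ?thesis .
  qed
qed

lemma th_al: "y \<in> carrier FF \<Longrightarrow> th (al y) = tt \<otimes>\<^bsub>GG\<^esub> th y \<otimes>\<^bsub>GG\<^esub> inv\<^bsub>GG\<^esub> tt"
proof -
  assume y: "y \<in> carrier FF"
  have h1: "(\<lambda>y. th (al y)) \<in> hom FF GG" by (rule hom_compI[OF al_hom th_hom])
  have h2: "(\<lambda>y. tt \<otimes>\<^bsub>GG\<^esub> th y \<otimes>\<^bsub>GG\<^esub> inv\<^bsub>GG\<^esub> tt) \<in> hom FF GG"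
    by (rule hom_compI[OF th_hom G.conj_hom[OF tt_closed]])
  have "\<forall>j\<in>FA. th (al (pres_gen FA {} j)) = tt \<otimes>\<^bsub>GG\<^esub> th (pres_gen FA {} j) \<otimes>\<^bsub>GG\<^esub> inv\<^bsub>GG\<^esub> tt"
  proof
    fix j assume j: "j \<in> FA"
    then show "th (al (pres_gen FA {} j)) = tt \<otimes>\<^bsub>GG\<^esub> th (pres_gen FA {} j) \<otimes>\<^bsub>GG\<^esub> inv\<^bsub>GG\<^esub> tt"
      using th_Aimg[of "j + 1"] th_B[of "j + 1"] al_B[of "j + 1"] by (simp add: al_gen gen_as_B G.m_assoc del: Aimg.simps)
  qed
  then show ?thesis using G.pg_hom_unique[OF h1 h2 _ y] by blast
qed

lemma th_be: "y \<in> carrier FF \<Longrightarrow> th (be y) = inv\<^bsub>GG\<^esub> tt \<otimes>\<^bsub>GG\<^esub> th y \<otimes>\<^bsub>GG\<^esub> tt"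
proof -
  assume y: "y \<in> carrier FF"
  have "th y = tt \<otimes>\<^bsub>GG\<^esub> th (be y) \<otimes>\<^bsub>GG\<^esub> inv\<^bsub>GG\<^esub> tt"
    using th_al[of "be y"] y by (simp add: al_be)
  then have "inv\<^bsub>GG\<^esub> tt \<otimes>\<^bsub>GG\<^esub> th y \<otimes>\<^bsub>GG\<^esub> tt = inv\<^bsub>GG\<^esub> tt \<otimes>\<^bsub>GG\<^esub> (tt \<otimes>\<^bsub>GG\<^esub> th (be y) \<otimes>\<^bsub>GG\<^esub> inv\<^bsub>GG\<^esub> tt) \<otimes>\<^bsub>GG\<^esub> tt"
    by simp
  also have "\<dots> = th (be y)" using y by (simp add: G.m_assoc)
  finally show ?thesis by simp
qed

lemma th_apow: "y \<in> carrier FF \<Longrightarrow>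
  th (apow al be a y) = tt [^]\<^bsub>GG\<^esub> a \<otimes>\<^bsub>GG\<^esub> th y \<otimes>\<^bsub>GG\<^esub> inv\<^bsub>GG\<^esub> (tt [^]\<^bsub>GG\<^esub> a)"
proof (induction a rule: int_induct[where k = 0])
  case base then show ?case by simp
next
  case (step1 i)
  have e: "tt [^]\<^bsub>GG\<^esub> (i + 1) = tt \<otimes>\<^bsub>GG\<^esub> tt [^]\<^bsub>GG\<^esub> i"
    using G.int_pow_mult[OF tt_closed, of 1 i] by (simp add: add.commute)
  show ?case using step1 e by (simp add: AG.apow_succ th_al G.inv_mult_group G.m_assoc)
next
  case (step2 i)
  have e: "tt [^]\<^bsub>GG\<^esub> (i - 1) = inv\<^bsub>GG\<^esub> tt \<otimes>\<^bsub>GG\<^esub> tt [^]\<^bsub>GG\<^esub> i"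
    using G.int_pow_mult[OF tt_closed, of "-1" i] G.int_pow_neg[OF tt_closed, of 1] by simp
  show ?case using step2 e by (simp add: AG.apow_pred th_be G.inv_mult_group G.m_assoc)
qed

definition Th :: "word set \<times> int \<Rightarrow> word set" where
  "Th p = th (fst p) \<otimes>\<^bsub>GG\<^esub> tt [^]\<^bsub>GG\<^esub> snd p"

lemma Th_hom: "Th \<in> hom SS GG"
proof (rule homI)
  fix p assume "p \<in> carrier SS"
  then show "Th p \<in> carrier GG" by (auto simp: Th_def AG.sdp_simps)
next
  fix p q assume "p \<in> carrier SS" "q \<in> carrier SS"
  then obtain x a y b where pq: "p = (x, a)" "q = (y, b)" "x \<in> carrier FF" "y \<in> carrier FF"
    by (auto simp: AG.sdp_simps)
  then show "Th (p \<otimes>\<^bsub>SS\<^esub> q) = Th p \<otimes>\<^bsub>GG\<^esub> Th q"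
    by (simp add: Th_def AG.sdp_simps th_apow G.int_pow_mult G.m_assoc)
qed

end



context MK
begin

abbreviation "fS \<equiv> (\<lambda>i. (Bg i, 1::int))"

lemma S_mult1: "x \<in> carrier FF \<Longrightarrow> y \<in> carrier FF \<Longrightarrow>
  (x, 1) \<otimes>\<^bsub>SS\<^esub> (y, 1) = (x \<otimes>\<^bsub>FF\<^esub> al y, 2)"
  using AG.apow_succ[of y 0] by (simp add: AG.sdp_simps)

lemma comm_S: "1 \<le> i \<Longrightarrow> i \<le> m \<Longrightarrow> fS i \<otimes>\<^bsub>SS\<^esub> fS (i+1) = fS (i+1) \<otimes>\<^bsub>SS\<^esub> fS i"
proof -
  assume i: "1 \<le> i" "i \<le> m"
  have p: "pp (i + 1) = i" using i by (simp add: pp_def)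
  have "fS i \<otimes>\<^bsub>SS\<^esub> fS (i+1) = (Bg i \<otimes>\<^bsub>FF\<^esub> Aimg (i+1), 2)"
    using i by (simp add: S_mult1 al_B del: Aimg.simps)
  also have "\<dots> = (Bg (i+1) \<otimes>\<^bsub>FF\<^esub> Aimg i, 2)"
    using i Aimg_step[of "i+1"] p by (simp add: F.m_assoc del: Aimg.simps)
  also have "\<dots> = fS (i+1) \<otimes>\<^bsub>SS\<^esub> fS i"
    using i by (simp add: S_mult1 al_B del: Aimg.simps)
  finally show ?thesis .
qed

lemma conj_S: "1 \<le> j \<Longrightarrow> j \<le> k \<Longrightarrow> fS j \<otimes>\<^bsub>SS\<^esub> fS (m+j+1) = fS (m+j+1) \<otimes>\<^bsub>SS\<^esub> fS (m+j)"
proof -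
  assume j: "1 \<le> j" "j \<le> k"
  have p: "pp (m+j+1) = j" using j by (simp add: pp_def)
  have "fS j \<otimes>\<^bsub>SS\<^esub> fS (m+j+1) = (Bg j \<otimes>\<^bsub>FF\<^esub> Aimg (m+j+1), 2)"
    using j by (simp add: S_mult1 al_B del: Aimg.simps)
  also have "\<dots> = (Bg (m+j+1) \<otimes>\<^bsub>FF\<^esub> Aimg (m+j), 2)"
    using j Aimg_step[of "m+j+1"] p by (simp add: F.m_assoc del: Aimg.simps)
  also have "\<dots> = fS (m+j+1) \<otimes>\<^bsub>SS\<^esub> fS (m+j)"
    using j by (simp add: S_mult1 al_B del: Aimg.simps)
  finally show ?thesis .
qed

lemma fS_closed: "\<forall>i\<in>GA. fS i \<in> carrier SS"
  by (simp add: AG.sdp_simps)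

lemma ev_rel: "r \<in> GR \<Longrightarrow> evw SS GA fS r = \<one>\<^bsub>SS\<^esub>"
proof -
  assume "r \<in> GR"
  then consider (c) i where "r = [(i, False), (i+1, False), (i, True), (i+1, True)]" "1 \<le> i" "i \<le> m"
    | (h) j where "r = [(m+j+1, False), (j, True), (m+j+1, True), (m+j, False)]" "1 \<le> j" "j \<le> k"
    unfolding G_rels_def by blast
  then show ?thesis
  proof cases
    case c
    have E: "evw SS GA fS r = inv\<^bsub>SS\<^esub> fS i \<otimes>\<^bsub>SS\<^esub> (inv\<^bsub>SS\<^esub> fS (i+1) \<otimes>\<^bsub>SS\<^esub> (fS i \<otimes>\<^bsub>SS\<^esub> (fS (i+1) \<otimes>\<^bsub>SS\<^esub> \<one>\<^bsub>SS\<^esub>)))"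
      using c by (simp add: lval_def)
    have cl: "fS i \<in> carrier SS" "fS (i+1) \<in> carrier SS" using c by (simp_all add: AG.sdp_simps)
    have "inv\<^bsub>SS\<^esub> fS i \<otimes>\<^bsub>SS\<^esub> (inv\<^bsub>SS\<^esub> fS (i+1) \<otimes>\<^bsub>SS\<^esub> (fS i \<otimes>\<^bsub>SS\<^esub> (fS (i+1) \<otimes>\<^bsub>SS\<^esub> \<one>\<^bsub>SS\<^esub>))) = \<one>\<^bsub>SS\<^esub>"
      using S.comm_rel_iff[OF cl] comm_S[OF c(2,3)] by blast
    then show ?thesis using E by simp
  next
    case h
    have E: "evw SS GA fS r = inv\<^bsub>SS\<^esub> fS (m+j+1) \<otimes>\<^bsub>SS\<^esub> (fS j \<otimes>\<^bsub>SS\<^esub> (fS (m+j+1) \<otimes>\<^bsub>SS\<^esub> (inv\<^bsub>SS\<^esub> fS (m+j) \<otimes>\<^bsub>SS\<^esub> \<one>\<^bsub>SS\<^esub>)))"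
      using h by (simp add: lval_def)
    have cl: "fS j \<in> carrier SS" "fS (m+j) \<in> carrier SS" "fS (m+j+1) \<in> carrier SS"
      using h by (simp_all add: AG.sdp_simps)
    have "inv\<^bsub>SS\<^esub> fS (m+j+1) \<otimes>\<^bsub>SS\<^esub> (fS j \<otimes>\<^bsub>SS\<^esub> (fS (m+j+1) \<otimes>\<^bsub>SS\<^esub> (inv\<^bsub>SS\<^esub> fS (m+j) \<otimes>\<^bsub>SS\<^esub> \<one>\<^bsub>SS\<^esub>))) = \<one>\<^bsub>SS\<^esub>"
      using S.conj_rel_iff[OF cl] conj_S[OF h(2,3)] by blast
    then show ?thesis using E by simp
  qed
qed

definition ps :: "word set \<Rightarrow> word set \<times> int" where
  "ps = pext SS GA GR fS"

lemma ps_hom: "ps \<in> hom GG SS"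
  unfolding ps_def by (rule S.pext_hom[OF fS_closed]) (simp add: ev_rel)

lemma ps_gen: "1 \<le> i \<Longrightarrow> i \<le> m + k + 1 \<Longrightarrow> ps (ag i) = (Bg i, 1)"
  unfolding ps_def ag_def using S.pext_gen[OF fS_closed, of GR i] ev_rel by simp

lemma Th_ps: "g \<in> carrier GG \<Longrightarrow> Th (ps g) = g"
proof -
  assume g: "g \<in> carrier GG"
  have "\<forall>i\<in>GA. Th (ps (pres_gen GA GR i)) = pres_gen GA GR i"
  proof
    fix i assume "i \<in> GA"
    then show "Th (ps (pres_gen GA GR i)) = pres_gen GA GR i"
      using ps_gen[of i] th_B[of i] ag_closed[of i] G.int_pow_1[OF tt_closed] tt_closed
      by (simp add: Th_def ag_def G.m_assoc)
  qed
  then show ?thesis using G.pg_hom_unique[OF hom_compI[OF ps_hom Th_hom] hom_idI _ g] by blast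
qed

lemma emb_hom: "(\<lambda>x. (x, 0::int)) \<in> hom FF SS"
  by (rule homI) (simp_all add: AG.sdp_simps)

lemma inv_t_S: "inv\<^bsub>SS\<^esub> (\<one>\<^bsub>FF\<^esub>, 1) = (\<one>\<^bsub>FF\<^esub>, -1)"
  by (rule S.inv_equality) (simp_all add: AG.sdp_simps)

lemma ps_th: "x \<in> carrier FF \<Longrightarrow> ps (th x) = (x, 0)"
proof -
  assume x: "x \<in> carrier FF"
  have "\<forall>j\<in>FA. ps (th (pres_gen FA {} j)) = (pres_gen FA {} j, 0)"
  proof
    fix j assume j: "j \<in> FA"
    have "ps (th (pres_gen FA {} j)) = ps (ag (j+1)) \<otimes>\<^bsub>SS\<^esub> inv\<^bsub>SS\<^esub> ps tt"
      using j ps_hom by (simp add: th_gen hom_mult group_hom.hom_inv[OF group_hom.intro[OF G.group_axioms S.group_axioms group_hom_axioms.intro[OF ps_hom]]])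
    also have "\<dots> = (Bg (j+1), 1) \<otimes>\<^bsub>SS\<^esub> (\<one>\<^bsub>FF\<^esub>, -1)"
      using j ps_gen[of "j+1"] ps_gen[of 1] inv_t_S by simp
    also have "\<dots> = (pres_gen FA {} j, 0)"
      using j by (simp add: AG.sdp_simps gen_as_B)
    finally show "ps (th (pres_gen FA {} j)) = (pres_gen FA {} j, 0)" .
  qed
  then show ?thesis using S.pg_hom_unique[OF hom_compI[OF th_hom ps_hom] emb_hom _ x] by blast
qed

end



context MK
begin

lemma snd_hom: "snd \<in> hom SS integer_group"
  by (rule homI) (auto simp: AG.sdp_simps)

lemma ps_closed: "g \<in> carrier GG \<Longrightarrow> ps g \<in> carrier SS"
  using ps_hom by (auto simp: hom_def)

lemma main:
  "\<exists>\<phi>. \<phi> \<in> hom GG integer_group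
     \<and> (\<forall>i \<in> GA. \<phi> (pres_gen GA GR i) = 1)
     \<and> \<phi> ` carrier GG = carrier integer_group
     \<and> GG\<lparr>carrier := kernel GG integer_group \<phi>\<rparr> \<cong> FF"
proof (intro exI conjI)
  let ?phi = "\<lambda>g. snd (ps g)"
  show ph: "?phi \<in> hom GG integer_group" by (rule hom_compI[OF ps_hom snd_hom])
  show "\<forall>i \<in> GA. ?phi (pres_gen GA GR i) = 1"
    using ps_gen by (simp add: ag_def)
  show "?phi ` carrier GG = carrier integer_group"
  proof
    show "?phi ` carrier GG \<subseteq> carrier integer_group" by simp
    show "carrier integer_group \<subseteq> ?phi ` carrier GG"
    proof
      fix z :: int
      have "?phi (tt [^]\<^bsub>GG\<^esub> z) = (?phi tt) [^]\<^bsub>integer_group\<^esub> z"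
        by (rule hom_int_pow[OF ph tt_closed G.group_axioms group_integer_group])
      also have "\<dots> = z" using ps_gen[of 1] by simp
      finally have "z = ?phi (tt [^]\<^bsub>GG\<^esub> z)" by simp
      then show "z \<in> ?phi ` carrier GG" by (rule image_eqI[OF _ G.int_pow_closed[OF tt_closed]])
    qed
  qed
  let ?K = "kernel GG integer_group ?phi"
  let ?rho = "\<lambda>g. fst (ps g)"
  have psK: "g \<in> ?K \<Longrightarrow> ps g = (?rho g, 0)" for g
    by (auto simp: kernel_def prod_eq_iff)
  have rhoC: "g \<in> ?K \<Longrightarrow> ?rho g \<in> carrier FF" for g
    using ps_closed[of g] by (auto simp: kernel_def AG.sdp_simps)
  have "?rho \<in> iso (GG\<lparr>carrier := ?K\<rparr>) FF"
    unfolding iso_def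
  proof (intro CollectI conjI)
    show "?rho \<in> hom (GG\<lparr>carrier := ?K\<rparr>) FF"
    proof (rule homI)
      fix g assume "g \<in> carrier (GG\<lparr>carrier := ?K\<rparr>)"
      then show "?rho g \<in> carrier FF" using rhoC by simp
    next
      fix g h assume gh: "g \<in> carrier (GG\<lparr>carrier := ?K\<rparr>)" "h \<in> carrier (GG\<lparr>carrier := ?K\<rparr>)"
      then have gh': "g \<in> ?K" "h \<in> ?K" by simp_all
      then have c: "g \<in> carrier GG" "h \<in> carrier GG" by (simp_all add: kernel_def)
      have "ps (g \<otimes>\<^bsub>GG\<^esub> h) = ps g \<otimes>\<^bsub>SS\<^esub> ps h" using ps_hom c by (simp add: hom_mult)
      also have "\<dots> = (?rho g \<otimes>\<^bsub>FF\<^esub> ?rho h, 0)"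
      proof -
        obtain x y where xy: "ps g = (x, 0)" "ps h = (y, 0)" using psK[OF gh'(1)] psK[OF gh'(2)] by blast
        then show ?thesis by (simp add: AG.sdp_simps)
      qed
      finally show "?rho (g \<otimes>\<^bsub>GG\<lparr>carrier := ?K\<rparr>\<^esub> h) = ?rho g \<otimes>\<^bsub>FF\<^esub> ?rho h" by simp
    qed
    show "bij_betw ?rho (carrier (GG\<lparr>carrier := ?K\<rparr>)) (carrier FF)"
      unfolding bij_betw_def
    proof
      show "inj_on ?rho (carrier (GG\<lparr>carrier := ?K\<rparr>))"
      proof (rule inj_onI)
        fix g h assume "g \<in> carrier (GG\<lparr>carrier := ?K\<rparr>)" "h \<in> carrier (GG\<lparr>carrier := ?K\<rparr>)"
          and e: "?rho g = ?rho h"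
        then have gh': "g \<in> ?K" "h \<in> ?K" by simp_all
        then have c: "g \<in> carrier GG" "h \<in> carrier GG" by (simp_all add: kernel_def)
        have "ps g = ps h" using psK[OF gh'(1)] psK[OF gh'(2)] e by simp
        then have "Th (ps g) = Th (ps h)" by simp
        then show "g = h" using Th_ps[OF c(1)] Th_ps[OF c(2)] by simp
      qed
      show "?rho ` carrier (GG\<lparr>carrier := ?K\<rparr>) = carrier FF"
      proof
        show "?rho ` carrier (GG\<lparr>carrier := ?K\<rparr>) \<subseteq> carrier FF" using rhoC by auto
        show "carrier FF \<subseteq> ?rho ` carrier (GG\<lparr>carrier := ?K\<rparr>)"
        proof
          fix x assume x: "x \<in> carrier FF"
          have "th x \<in> ?K" using ps_th[OF x] TH.hom_closed[OF x] by (simp add: kernel_def)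
          moreover have "x = ?rho (th x)" using ps_th[OF x] by simp
          ultimately show "x \<in> ?rho ` carrier (GG\<lparr>carrier := ?K\<rparr>)" by simp
        qed
      qed
    qed
  qed
  then show "GG\<lparr>carrier := ?K\<rparr> \<cong> FF" by (rule is_isoI)
qed

end

theorem proposition5p3:
  fixes m k :: nat
  assumes "1 \<le> m" and "k \<le> m"
  shows "\<exists>\<phi>. \<phi> \<in> hom (G_mk m k) integer_group
            \<and> (\<forall>i \<in> G_gens m k. \<phi> (pres_gen (G_gens m k) (G_rels m k) i) = 1)
            \<and> \<phi> ` carrier (G_mk m k) = carrier integer_group
            \<and> (G_mk m k)\<lparr>carrier := kernel (G_mk m k) integer_group \<phi>\<rparr>
                 \<cong> free_group_rank (m + k)"
proof -
  have e: "free_group_rank (m+k) = presented_group (MK.FA m k) {}"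
    by (simp add: free_group_rank_def MK.FA_def)
  show ?thesis unfolding G_mk_def e by (rule MK.main)
qed

end
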